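(* A cubic graph $H$ that is $2$-connected but not $3$-connected can be decomposed, via the $H$-decomposition along nontrivial $2$-edge cuts, into a collection of cubic loopless graphs $\{H_i\}$ each of which is $3$-connected.
   Context: Graphs are finite; multiple edges allowed, loops not. For a cubic graph $G$ with a $2$-edge cut $E_C=\{s_{11}s_{21},s_{12}s_{22}\}$ (the $s_{1j}$ on one side, the $s_{2j}$ on the other), let $G_1',G_2'$ be the subgraphs induced on the two sides of $G\setminus E_C$, and let $G_i$ be $G_i'$ with the edge $s_{i1}s_{i2}$ added; we write $G=G_1\,H\,G_2$. The cut is nontrivial if $G_1$ and $G_2$ each have fewer vertices than $G$. Decomposing via $H$ means repeatedly replacing a graph in the collection (starting from $\{H\}$) by the two graphs $G_1,G_2$ arising from a nontrivial $2$-edge cut of it. *)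

theory Defs
  imports Main "HOL-Library.Multiset"
begin

text \<open>Finite multigraphs: a vertex set and a multiset of edges; an edge is a set of
  one (a loop) or two (an ordinary edge) vertices. Parallel edges are repeated
  elements of the multiset.\<close>

type_synonym 'v mgraph = "'v set \<times> 'v set multiset"

definition mgraph :: "'v mgraph \<Rightarrow> bool" where
  "mgraph G \<longleftrightarrow> finite (fst G) \<and>
     (\<forall>e\<in>#snd G. e \<subseteq> fst G \<and> 1 \<le> card e \<and> card e \<le> 2)"

definition loopless :: "'v mgraph \<Rightarrow> bool" where
  "loopless G \<longleftrightarrow> (\<forall>e\<in>#snd G. card e = 2)"

text \<open>Degree: every incident edge counts once, loops count twice.\<close>
definition degree :: "'v mgraph \<Rightarrow> 'v \<Rightarrow> nat" where
  "degree G v = size {#e \<in># snd G. v \<in> e#} + count (snd G) {v}"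

definition cubic :: "'v mgraph \<Rightarrow> bool" where
  "cubic G \<longleftrightarrow> (\<forall>v\<in>fst G. degree G v = 3)"

definition adj :: "'v set multiset \<Rightarrow> 'v \<Rightarrow> 'v \<Rightarrow> bool" where
  "adj E u v \<longleftrightarrow> (\<exists>e\<in>#E. u \<in> e \<and> v \<in> e \<and> u \<noteq> v)"

definition connected_mg :: "'v set \<Rightarrow> 'v set multiset \<Rightarrow> bool" where
  "connected_mg V E \<longleftrightarrow> V \<noteq> {} \<and> (\<forall>u\<in>V. \<forall>v\<in>V. (adj E)\<^sup>*\<^sup>* u v)"

text \<open>k-edge-connectedness (connectivity of cubic graphs, edge version).\<close>
definition k_connected :: "nat \<Rightarrow> 'v mgraph \<Rightarrow> bool" where
  "k_connected k G \<longleftrightarrow> connected_mg (fst G) (snd G) \<and>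
     (\<forall>F. F \<subseteq># snd G \<and> size F < k \<longrightarrow> connected_mg (fst G) (snd G - F))"

definition split_2cut :: "'v mgraph \<Rightarrow> 'v mgraph \<Rightarrow> 'v mgraph \<Rightarrow> bool" where
  "split_2cut G G1 G2 \<longleftrightarrow>
    (\<exists>S1 S2 s11 s12 s21 s22.
       S1 \<union> S2 = fst G \<and> S1 \<inter> S2 = {} \<and> S1 \<noteq> {} \<and> S2 \<noteq> {} \<and>
       s11 \<in> S1 \<and> s12 \<in> S1 \<and> s21 \<in> S2 \<and> s22 \<in> S2 \<and>
       {#e \<in># snd G. e \<inter> S1 \<noteq> {} \<and> e \<inter> S2 \<noteq> {}#} = {#{s11, s21}, {s12, s22}#} \<and>
       G1 = (S1, add_mset {s11, s12} {#e \<in># snd G. e \<subseteq> S1#}) \<and>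
       G2 = (S2, add_mset {s21, s22} {#e \<in># snd G. e \<subseteq> S2#}) \<and>
       card (fst G1) < card (fst G) \<and> card (fst G2) < card (fst G))"

definition decomp_step :: "'v mgraph multiset \<Rightarrow> 'v mgraph multiset \<Rightarrow> bool" where
  "decomp_step C C' \<longleftrightarrow>
    (\<exists>G G1 G2. G \<in># C \<and> split_2cut G G1 G2 \<and>
       C' = add_mset G1 (add_mset G2 (C - {#G#})))"

end

theory Submission
  imports Defs
begin

lemma rtranclp_closed:
  assumes "r\<^sup>*\<^sup>* x y" "P x" "\<And>u w. P u \<Longrightarrow> r u w \<Longrightarrow> P w"
  shows "P y"
  using assms(1,2) by (induction rule: rtranclp_induct) (auto intro: assms(3))

lemma card2_eq:
  assumes "card c = 2" "u \<in> c" "w \<in> c" "u \<noteq> w"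
  shows "c = {u, w}"
proof -
  have "finite c" using assms(1) card.infinite by fastforce
  have "{u,w} \<subseteq> c" using assms by auto
  moreover have "card {u,w} = 2" using assms by auto
  ultimately show ?thesis using \<open>finite c\<close> assms(1) card_subset_eq by metis
qed

lemma proj_reach:
  fixes E E' :: "'v set multiset"
  assumes V: "\<forall>e\<in>#E. e \<subseteq> S1 \<union> S2" and dis: "S1 \<inter> S2 = {}"
    and s: "s11\<in>S1" "s12 \<in> S1" "s21 \<in> S2" "s22\<in>S2"
    and cr: "\<forall>e\<in>#E. e \<inter> S1 \<noteq> {} \<and> e \<inter> S2 \<noteq> {} \<longrightarrow> e = {s11,s21} \<or> e = {s12,s22}"
    and in1: "\<forall>e\<in>#E. e \<subseteq> S1 \<longrightarrow> e \<in># E'"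
    and nw: "{s12,s22} \<in># E \<Longrightarrow> {s11,s12} \<in># E'"
    and r: "(adj E)\<^sup>*\<^sup>* u v"
  shows "(adj E')\<^sup>*\<^sup>* (if u \<in> S1 then u else s11) (if v \<in> S1 then v else s11)"
  using r
proof (induction rule: rtranclp_induct)
  case base
  then show ?case by simp
next
  case (step y z)
  let ?p = "\<lambda>w. if w \<in> S1 then w else s11"
  have "?p y = ?p z \<or> adj E' (?p y) (?p z)"
  proof -
    obtain e where e: "e \<in># E" "y \<in> e" "z \<in> e" "y \<noteq> z" using step(2) unfolding adj_def by blast
    show ?thesis
    proof (cases "e \<subseteq> S1")
      case True
      then have "?p y = y" "?p z = z" "e \<in># E'" using e in1 by auto
      then show ?thesis using e unfolding adj_def by (simp only:) blast
    next
      case False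
      show ?thesis
      proof (cases "e \<inter> S1 = {}")
        case True
        then have "?p y = s11" "?p z = s11" using e by auto
        then show ?thesis by simp
      next
        case F2: False
        have "e \<inter> S2 \<noteq> {}" using False V e(1) by auto
        then have "e = {s11,s21} \<or> e = {s12,s22}" using cr e(1) F2 by auto
        then show ?thesis
        proof
          assume "e = {s11,s21}"
          then have "?p y = s11" "?p z = s11" using e s dis by auto
          then show ?thesis by simp
        next
          assume h: "e = {s12,s22}"
          then have "{s11,s12} \<in># E'" using nw e(1) by simp
          have yz: "y \<in> {s12,s22}" "z \<in> {s12,s22}" using e h by auto
          have "s22 \<notin> S1" using s dis by auto
          then have "?p y \<in> {s11,s12}" "?p z \<in> {s11,s12}" using yz s by auto
          then show ?thesis using \<open>{s11,s12} \<in># E'\<close> unfolding adj_def by blast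
        qed
      qed
    qed
  qed
  then show ?case
  proof
    assume "?p y = ?p z" then show ?case using step(3) by simp
  next
    assume "adj E' (?p y) (?p z)" then show ?case using step(3) by (rule rtranclp.rtrancl_into_rtrancl[rotated])
  qed
qed

lemma cut_distinct:
  assumes mg: "mgraph G" and ll: "loopless G" and cu: "cubic G" and k2: "k_connected 2 G"
    and V: "S1 \<union> S2 = fst G" and dis: "S1 \<inter> S2 = {}"
    and s: "a \<in> S1" "s21 \<in> S2" "s22 \<in> S2"
    and cr: "{#e \<in># snd G. e \<inter> S1 \<noteq> {} \<and> e \<inter> S2 \<noteq> {}#} = {#{a,s21},{a,s22}#}"
  shows False
proof -
  define E where "E = snd G"
  have sub: "\<forall>e\<in>#E. e \<subseteq> S1 \<union> S2" using mg V unfolding mgraph_def E_def by auto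
  have c2: "\<forall>e\<in>#E. card e = 2" using ll unfolding loopless_def E_def by auto
  have "{a} \<notin># E" using c2 by fastforce
  then have "count E {a} = 0" by (simp add: not_in_iff)
  moreover have "degree G a = 3" using cu s V unfolding cubic_def by auto
  ultimately have deg: "size {#e\<in>#E. a\<in>e#} = 3" unfolding degree_def E_def by simp
  have part: "{#e\<in>#E. a\<in>e#} = {#e\<in>#E. a \<in> e \<and> e \<subseteq> S1#} + {#e\<in>#E. a \<in> e \<and> \<not> e \<subseteq> S1#}"
    using multiset_partition[of "{#e\<in>#E. a\<in>e#}" "\<lambda>e. e \<subseteq> S1"] by (simp add: filter_filter_mset)
  have "{#e\<in>#E. a \<in> e \<and> \<not> e \<subseteq> S1#} = {#e \<in># {#e \<in># E. e\<inter>S1\<noteq>{} \<and> e\<inter>S2\<noteq>{}#}. a \<in> e#}"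
    unfolding filter_filter_mset
  proof (rule filter_mset_cong[OF refl])
    fix e assume "e \<in># E"
    then have "e \<subseteq> S1 \<union> S2" using sub by auto
    then have "(\<not> e \<subseteq> S1) = (e \<inter> S2 \<noteq> {})" using dis by auto
    moreover have "a \<in> e \<Longrightarrow> e \<inter> S1 \<noteq> {}" using s by auto
    ultimately show "(a \<in> e \<and> \<not> e \<subseteq> S1) = ((e \<inter> S1 \<noteq> {} \<and> e \<inter> S2 \<noteq> {}) \<and> a \<in> e)"
      by blast
  qed
  also have "\<dots> = {#{a,s21},{a,s22}#}" by (subst cr[folded E_def]) simp
  finally have "size {#e\<in>#E. a \<in> e \<and> e \<subseteq> S1#} = 1" using deg part by simp
  then obtain f where f: "{#e\<in>#E. a \<in> e \<and> e \<subseteq> S1#} = {#f#}" using size_1_singleton_mset by blast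
  then have "f \<in># {#e\<in>#E. a \<in> e \<and> e \<subseteq> S1#}" by simp
  then have fE: "f \<in># E" "a \<in> f" "f \<subseteq> S1" by simp_all
  have "count {#e\<in>#E. a \<in> e \<and> e \<subseteq> S1#} f = 1" using f by simp
  then have cf: "count E f = 1" using fE by simp
  have "card f = 2" using c2 fE by auto
  then have "f \<noteq> {a}" by auto
  then obtain b where b: "b \<in> f" "b \<noteq> a" using fE(2) by blast
  have bS: "b \<in> S1" using b fE by auto
  have "connected_mg (fst G) (E - {#f#})"
    using k2 fE unfolding k_connected_def E_def by auto
  then have "(adj (E - {#f#}))\<^sup>*\<^sup>* b a" using bS s V unfolding connected_mg_def by auto
  then have "a \<in> S1 \<and> a \<noteq> a"
  proof (rule rtranclp_closed[where P="\<lambda>w. w \<in> S1 \<and> w \<noteq> a"])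
    show "b \<in> S1 \<and> b \<noteq> a" using bS b by auto
  next
    fix u w assume P: "u \<in> S1 \<and> u \<noteq> a" and ad: "adj (E - {#f#}) u w"
    then obtain e where e: "e \<in># E - {#f#}" "u \<in> e" "w \<in> e" "u \<noteq> w" unfolding adj_def by blast
    have eE: "e \<in># E" using e(1) by (meson in_diffD)
    have eS: "e \<subseteq> S1"
    proof (rule ccontr)
      assume "\<not> e \<subseteq> S1"
      then have "e \<inter> S2 \<noteq> {}" using sub eE by auto
      moreover have "e \<inter> S1 \<noteq> {}" using P e by auto
      ultimately have "e \<in># {#e \<in># E. e\<inter>S1\<noteq>{} \<and> e\<inter>S2\<noteq>{}#}" using eE by simp
      then have "e = {a,s21} \<or> e = {a,s22}" using cr unfolding E_def by simp
      then show False using P e s dis by auto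
    qed
    show "w \<in> S1 \<and> w \<noteq> a"
    proof
      show "w \<in> S1" using eS e by auto
      show "w \<noteq> a"
      proof
        assume "w = a"
        then have "e \<in># {#e\<in>#E. a \<in> e \<and> e \<subseteq> S1#}" using eE e eS by simp
        then have "e = f" using f by simp
        then show False using e(1) cf by (simp add: in_diff_count)
      qed
    qed
  qed
  then show False by simp
qed


lemma split_sym:
  assumes "split_2cut G G1 G2" shows "split_2cut G G2 G1"
proof -
  obtain S1 S2 s11 s12 s21 s22 where h:
       "S1 \<union> S2 = fst G" "S1 \<inter> S2 = {}" "S1 \<noteq> {}" "S2 \<noteq> {}"
       "s11 \<in> S1" "s12 \<in> S1" "s21 \<in> S2" "s22 \<in> S2"
       "{#e \<in># snd G. e \<inter> S1 \<noteq> {} \<and> e \<inter> S2 \<noteq> {}#} = {#{s11, s21}, {s12, s22}#}"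
       "G1 = (S1, add_mset {s11, s12} {#e \<in># snd G. e \<subseteq> S1#})"
       "G2 = (S2, add_mset {s21, s22} {#e \<in># snd G. e \<subseteq> S2#})"
       "card (fst G1) < card (fst G)" "card (fst G2) < card (fst G)"
    using assms unfolding split_2cut_def by blast
  have "{#e \<in># snd G. e \<inter> S2 \<noteq> {} \<and> e \<inter> S1 \<noteq> {}#} = {#e \<in># snd G. e \<inter> S1 \<noteq> {} \<and> e \<inter> S2 \<noteq> {}#}"
    by (rule filter_mset_cong) auto
  also have "\<dots> = {#{s21, s11}, {s22, s12}#}" using h(9) by (simp add: insert_commute)
  finally have c: "{#e \<in># snd G. e \<inter> S2 \<noteq> {} \<and> e \<inter> S1 \<noteq> {}#} = {#{s21, s11}, {s22, s12}#}" .
  have u: "S2 \<union> S1 = fst G" "S2 \<inter> S1 = {}" using h(1,2) by auto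
  show ?thesis unfolding split_2cut_def
    by (rule exI[of _ S2], rule exI[of _ S1], rule exI[of _ s21], rule exI[of _ s22],
        rule exI[of _ s11], rule exI[of _ s12]) (intro conjI; fact)
qed

lemma split_good1:
  assumes mg: "mgraph G" and ll: "loopless G" and cu: "cubic G" and k2: "k_connected 2 G"
    and sp: "split_2cut G G1 G2"
  shows "mgraph G1 \<and> loopless G1 \<and> cubic G1 \<and> k_connected 2 G1 \<and> card (fst G1) < card (fst G)"
proof -
  obtain S1 S2 s11 s12 s21 s22 where h:
       "S1 \<union> S2 = fst G" "S1 \<inter> S2 = {}" "S1 \<noteq> {}" "S2 \<noteq> {}"
       "s11 \<in> S1" "s12 \<in> S1" "s21 \<in> S2" "s22 \<in> S2"
       "{#e \<in># snd G. e \<inter> S1 \<noteq> {} \<and> e \<inter> S2 \<noteq> {}#} = {#{s11, s21}, {s12, s22}#}"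
       "G1 = (S1, add_mset {s11, s12} {#e \<in># snd G. e \<subseteq> S1#})"
       "card (fst G1) < card (fst G)"
    using sp unfolding split_2cut_def by blast
  define E where "E = snd G"
  define E1 where "E1 = {#e \<in># E. e \<subseteq> S1#}"
  define n where "n = {s11, s12}"
  have G1: "G1 = (S1, add_mset n E1)" using h(10) unfolding E1_def n_def E_def .
  have cr: "{#e \<in># E. e \<inter> S1 \<noteq> {} \<and> e \<inter> S2 \<noteq> {}#} = {#{s11, s21}, {s12, s22}#}"
    using h(9) unfolding E_def .
  have ne: "s11 \<noteq> s12"
  proof
    assume "s11 = s12"
    then show False using cut_distinct[OF mg ll cu k2 h(1,2,5,7,8)] h(9) by simp
  qed
  have nS: "s21 \<notin> S1" "s22 \<notin> S1" using h(2,7,8) by auto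
  have sub: "\<forall>e\<in>#E. e \<subseteq> S1 \<union> S2" using mg h(1) unfolding mgraph_def E_def by auto
  have c2: "\<forall>e\<in>#E. card e = 2" using ll unfolding loopless_def E_def by auto
  have crs: "\<And>e. e \<in># E \<Longrightarrow> e \<inter> S1 \<noteq> {} \<Longrightarrow> e \<inter> S2 \<noteq> {} \<Longrightarrow> e = {s11,s21} \<or> e = {s12,s22}"
  proof -
    fix e assume "e \<in># E" "e \<inter> S1 \<noteq> {}" "e \<inter> S2 \<noteq> {}"
    then have "e \<in># {#e \<in># E. e \<inter> S1 \<noteq> {} \<and> e \<inter> S2 \<noteq> {}#}" by simp
    then show "e = {s11,s21} \<or> e = {s12,s22}" unfolding cr by simp
  qed
  have cn: "card n = 2" using ne unfolding n_def by simp
  have nsub: "n \<subseteq> S1" using h(5,6) unfolding n_def by simp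
  have finV: "finite (fst G)" using mg unfolding mgraph_def by simp
  have "finite S1" using finV h(1) by (metis finite_Un)
  then have mg1: "mgraph G1"
    unfolding G1 mgraph_def using finV h(1) mg cn nsub unfolding mgraph_def E1_def E_def by auto
  have ll1: "loopless G1"
    unfolding G1 loopless_def using cn c2 unfolding E1_def by auto
  have cu1: "cubic G1"
    unfolding cubic_def
  proof
    fix v assume "v \<in> fst G1"
    then have v: "v \<in> S1" using G1 by simp
    have vne: "v \<noteq> s21" "v \<noteq> s22" using v nS by auto
    have vE: "{v} \<notin># E" using c2 by fastforce
    then have c0: "count E {v} = 0" by (simp add: not_in_iff)
    have "{v} \<notin># E1" using vE unfolding E1_def by simp
    moreover have "n \<noteq> {v}" using cn by auto
    ultimately have c01: "count (add_mset n E1) {v} = 0" by (simp add: not_in_iff)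
    have "degree G v = 3" using cu v h(1) unfolding cubic_def by auto
    then have deg: "size {#e\<in>#E. v\<in>e#} = 3" using c0 unfolding degree_def E_def by simp
    have part: "{#e\<in>#E. v\<in>e#} = {#e\<in>#E1. v \<in> e#} + {#e\<in>#E. v \<in> e \<and> \<not> e \<subseteq> S1#}"
      using multiset_partition[of "{#e\<in>#E. v\<in>e#}" "\<lambda>e. e \<subseteq> S1"]
      unfolding E1_def by (simp add: filter_filter_mset conj_commute)
    have "{#e\<in>#E. v \<in> e \<and> \<not> e \<subseteq> S1#} = {#e \<in># {#e \<in># E. e\<inter>S1\<noteq>{} \<and> e\<inter>S2\<noteq>{}#}. v \<in> e#}"
      unfolding filter_filter_mset
    proof (rule filter_mset_cong[OF refl])
      fix e assume "e \<in># E"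
      then have "e \<subseteq> S1 \<union> S2" using sub by auto
      then have "(\<not> e \<subseteq> S1) = (e \<inter> S2 \<noteq> {})" using h(2) by auto
      moreover have "v \<in> e \<Longrightarrow> e \<inter> S1 \<noteq> {}" using v by auto
      ultimately show "(v \<in> e \<and> \<not> e \<subseteq> S1) = ((e \<inter> S1 \<noteq> {} \<and> e \<inter> S2 \<noteq> {}) \<and> v \<in> e)"
        by blast
    qed
    also have "\<dots> = {#e \<in># {#{s11, s21}, {s12, s22}#}. v \<in> e#}" by (subst cr) simp
    finally have "size {#e\<in>#E. v \<in> e \<and> \<not> e \<subseteq> S1#} = (if v = s11 then 1 else 0) + (if v = s12 then 1 else 0)"
      using vne by simp
    then have "size {#e\<in>#E1. v \<in> e#} + (if v = s11 then 1 else 0) + (if v = s12 then 1 else 0) = 3"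
      using deg part by simp
    moreover have "size {#e \<in># add_mset n E1. v \<in> e#} = size {#e\<in>#E1. v \<in> e#} + (if v = s11 \<or> v = s12 then 1 else 0)"
      unfolding n_def by simp
    ultimately show "degree G1 v = 3" unfolding degree_def G1 using c01 ne by (simp split: if_splits)
  qed
  have reach: "(adj E')\<^sup>*\<^sup>* x y"
    if EG: "D \<subseteq># E" "connected_mg (fst G) D" "\<forall>e\<in>#D. e \<subseteq> S1 \<longrightarrow> e \<in># E'"
      "{s12,s22} \<in># D \<Longrightarrow> n \<in># E'" "x \<in> S1" "y \<in> S1" for D E' x y
  proof -
    have sD: "\<forall>e\<in>#D. e \<subseteq> S1 \<union> S2" using sub EG(1) by (meson mset_subset_eqD)
    have cD: "\<forall>e\<in>#D. e \<inter> S1 \<noteq> {} \<and> e \<inter> S2 \<noteq> {} \<longrightarrow> e = {s11,s21} \<or> e = {s12,s22}"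
      using crs EG(1) by (meson mset_subset_eqD)
    have "(adj D)\<^sup>*\<^sup>* x y" using EG(2,5,6) h(1) unfolding connected_mg_def by auto
    from proj_reach[OF sD h(2) h(5,6,7,8) cD EG(3) EG(4)[unfolded n_def] this]
    show ?thesis using EG(5,6) by simp
  qed
  have conn: "connected_mg S1 (add_mset n E1 - F)" if F: "F \<subseteq># add_mset n E1" "size F < 2" for F
  proof -
    have "size F = 0 \<or> size F = 1" using F(2) by arith
    then have "F = {#} \<or> (\<exists>f. F = {#f#})"
      using size_1_singleton_mset by auto
    then show ?thesis
    proof
      assume F0: "F = {#}"
      have "connected_mg (fst G) E" using k2 unfolding k_connected_def E_def by simp
      moreover have "\<forall>e\<in>#E. e \<subseteq> S1 \<longrightarrow> e \<in># add_mset n E1" unfolding E1_def by simp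
      ultimately have "(adj (add_mset n E1))\<^sup>*\<^sup>* x y" if "x \<in> S1" "y \<in> S1" for x y
        using reach[of E "add_mset n E1" x y] that by simp
      then show ?thesis unfolding connected_mg_def using h(3) F0 by simp
    next
      assume "\<exists>f. F = {#f#}"
      then obtain f where Ff: "F = {#f#}" by blast
      then have fin: "f \<in># add_mset n E1" using F(1) by simp
      show ?thesis
      proof (cases "f = n")
        case True
        define D where "D = E - {#{s12,s22}#}"
        have m: "{s12,s22} \<in># {#e \<in># E. e \<inter> S1 \<noteq> {} \<and> e \<inter> S2 \<noteq> {}#}" unfolding cr by simp
        then have inE: "{s12,s22} \<in># E" by simp
        have "{s11,s21} \<noteq> {s12,s22}" 
        proof
          assume "{s11,s21} = {s12,s22}"
          then have "s12 \<in> {s11,s21}" by simp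
          then show False using ne nS h(6) by auto
        qed
        then have "count {#e \<in># E. e \<inter> S1 \<noteq> {} \<and> e \<inter> S2 \<noteq> {}#} {s12,s22} = 1" unfolding cr by simp
        then have c1: "count E {s12,s22} = 1" using m by (simp split: if_splits)
        have "connected_mg (fst G) D" using k2 inE unfolding k_connected_def E_def D_def by simp
        moreover have "\<forall>e\<in>#D. e \<subseteq> S1 \<longrightarrow> e \<in># E1" unfolding E1_def D_def by (auto dest: in_diffD)
        moreover have "{s12,s22} \<notin># D" unfolding D_def using c1 by (simp add: in_diff_count)
        moreover have "add_mset n E1 - F = E1" using Ff True by simp
        ultimately have "(adj (add_mset n E1 - F))\<^sup>*\<^sup>* x y" if "x \<in> S1" "y \<in> S1" for x y
          using reach[of D E1 x y] D_def that by simp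
        then show ?thesis unfolding connected_mg_def using h(3) by simp
      next
        case False
        then have fE1: "f \<in># E1" using fin by simp
        then have fE: "f \<in># E" unfolding E1_def by simp
        define D where "D = E - {#f#}"
        have "connected_mg (fst G) D" using k2 fE unfolding k_connected_def E_def D_def by simp
        moreover have "\<forall>e\<in>#D. e \<subseteq> S1 \<longrightarrow> e \<in># add_mset n (E1 - {#f#})"
          unfolding E1_def D_def by (simp add: in_diff_count)
        moreover have "add_mset n E1 - F = add_mset n (E1 - {#f#})" using Ff False by simp
        ultimately have "(adj (add_mset n E1 - F))\<^sup>*\<^sup>* x y" if "x \<in> S1" "y \<in> S1" for x y
          using reach[of D "add_mset n (E1 - {#f#})" x y] D_def that by simp
        then show ?thesis unfolding connected_mg_def using h(3) by simp
      qed
    qed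
  qed
  have "connected_mg S1 (add_mset n E1)" using conn[of "{#}"] by simp
  then have k21: "k_connected 2 G1"
    unfolding k_connected_def G1 fst_conv snd_conv using conn by blast
  show ?thesis using mg1 ll1 cu1 k21 h(11) by simp
qed


lemma size2_mset: "size (M::'a multiset) = 2 \<Longrightarrow> \<exists>a b. M = {#a, b#}"
proof -
  assume "size M = 2"
  then obtain a N where "M = add_mset a N" "size N = 1"
    using size_eq_Suc_imp_eq_union[of M 1] by auto
  moreover obtain b where "N = {#b#}" using size_1_singleton_mset[OF \<open>size N = 1\<close>] by blast
  ultimately show ?thesis by auto
qed

lemma find_split:
  assumes mg: "mgraph G" and ll: "loopless G" and k2: "k_connected 2 G"
    and n3: "\<not> k_connected 3 G"
  shows "\<exists>G1 G2. split_2cut G G1 G2"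
proof -
  define E where "E = snd G"
  define V where "V = fst G"
  have conn: "connected_mg V E" using k2 unfolding k_connected_def V_def E_def by simp
  have "\<not> (\<forall>F. F \<subseteq># E \<and> size F < 3 \<longrightarrow> connected_mg V (E - F))"
    using n3 conn unfolding k_connected_def V_def E_def by simp
  then obtain F where F: "F \<subseteq># E" "size F < 3" "\<not> connected_mg V (E - F)"
    by blast
  have "V \<noteq> {}" using conn unfolding connected_mg_def by simp
  then obtain x y where xy: "x \<in> V" "y \<in> V" "\<not> (adj (E - F))\<^sup>*\<^sup>* x y"
    using F(3) unfolding connected_mg_def by blast
  define S1 where "S1 = {w\<in>V. (adj (E - F))\<^sup>*\<^sup>* x w}"
  define S2 where "S2 = V - S1"
  have x1: "x \<in> S1" using xy unfolding S1_def by simp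
  have y2: "y \<in> S2" using xy unfolding S1_def S2_def by simp
  have un: "S1 \<union> S2 = V" unfolding S1_def S2_def by auto
  have dis: "S1 \<inter> S2 = {}" unfolding S2_def by auto
  have sub: "\<forall>e\<in>#E. e \<subseteq> V" using mg unfolding mgraph_def E_def V_def by auto
  have c2: "\<forall>e\<in>#E. card e = 2" using ll unfolding loopless_def E_def by auto
  have finV: "finite V" using mg unfolding mgraph_def V_def by simp
  define C where "C = {#e \<in># E. e \<inter> S1 \<noteq> {} \<and> e \<inter> S2 \<noteq> {}#}"
  have CE: "C \<subseteq># E" unfolding C_def by simp
  have cnt: "count E e \<le> count F e" if hh: "e \<inter> S1 \<noteq> {}" "e \<inter> S2 \<noteq> {}" for e
  proof (rule ccontr)
    assume "\<not> count E e \<le> count F e"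
    then have eEF: "e \<in># E - F" by (simp add: in_diff_count)
    obtain u w where uw: "u \<in> e" "u \<in> S1" "w \<in> e" "w \<in> S2" using hh by blast
    have "u \<noteq> w" using uw dis by auto
    then have "adj (E - F) u w" unfolding adj_def using eEF uw by blast
    moreover have "(adj (E - F))\<^sup>*\<^sup>* x u" using uw unfolding S1_def by simp
    ultimately have "(adj (E - F))\<^sup>*\<^sup>* x w" by (rule rtranclp.rtrancl_into_rtrancl[rotated])
    moreover have "w \<in> V" using uw unfolding S2_def by simp
    ultimately have "w \<in> S1" unfolding S1_def by simp
    then show False using uw dis by auto
  qed
  have CF: "C \<subseteq># F"
  proof (rule mset_subset_eqI)
    fix e show "count C e \<le> count F e" unfolding C_def using cnt by simp
  qed
  then have "size C \<le> 2" using F(2) size_mset_mono[OF CF] by simp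
  moreover have "\<not> size C < 2"
  proof
    assume "size C < 2"
    then have "connected_mg V (E - C)" using k2 CE unfolding k_connected_def V_def E_def by simp
    then have "(adj (E - C))\<^sup>*\<^sup>* x y" using xy unfolding connected_mg_def by simp
    then have "y \<in> S1"
    proof (rule rtranclp_closed[where P="\<lambda>w. w \<in> S1"])
      show "x \<in> S1" by (fact x1)
    next
      fix u w assume u: "u \<in> S1" and "adj (E - C) u w"
      then obtain e where e: "e \<in># E - C" "u \<in> e" "w \<in> e" unfolding adj_def by blast
      have eE: "e \<in># E" using e(1) by (meson in_diffD)
      show "w \<in> S1"
      proof (rule ccontr)
        assume "w \<notin> S1"
        moreover have "w \<in> V" using sub eE e(3) by blast
        ultimately have "w \<in> S2" unfolding S2_def by simp
        then have cr: "e \<inter> S1 \<noteq> {}" "e \<inter> S2 \<noteq> {}" using u e by auto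
        then have "count C e = count E e" unfolding C_def by simp
        then show False using e(1) by (simp add: in_diff_count)
      qed
    qed
    then show False using y2 dis by auto
  qed
  ultimately have "size C = 2" by simp
  then obtain c1 c2 where C2: "C = {#c1, c2#}" using size2_mset by blast
  have ends: "\<exists>a b. c = {a, b} \<and> a \<in> S1 \<and> b \<in> S2" if "c \<in># C" for c
  proof -
    have cE: "c \<in># E" "c \<inter> S1 \<noteq> {}" "c \<inter> S2 \<noteq> {}" using that unfolding C_def by simp_all
    then obtain a b where ab: "a \<in> c" "a \<in> S1" "b \<in> c" "b \<in> S2" by blast
    have "a \<noteq> b" using ab dis by auto
    moreover have "card c = 2" using c2 cE(1) by simp
    ultimately have "c = {a, b}" using card2_eq ab(1,3) by metis
    then show ?thesis using ab by blast
  qed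
  have "c1 \<in># C" "c2 \<in># C" using C2 by simp_all
  then obtain s11 s21 s12 s22 where e1: "c1 = {s11, s21}" "s11 \<in> S1" "s21 \<in> S2"
    and e2: "c2 = {s12, s22}" "s12 \<in> S1" "s22 \<in> S2" using ends by meson
  have ne1: "S1 \<noteq> {}" "S2 \<noteq> {}" using x1 y2 by auto
  have "S1 \<subset> V" using un dis ne1(2) by auto
  then have cd1: "card S1 < card V" using finV by (rule psubset_card_mono[rotated])
  have "S2 \<subset> V" using un dis ne1(1) by auto
  then have cd2: "card S2 < card V" using finV by (rule psubset_card_mono[rotated])
  have ce: "{#e \<in># snd G. e \<inter> S1 \<noteq> {} \<and> e \<inter> S2 \<noteq> {}#} = {#{s11, s21}, {s12, s22}#}"
    using C2 e1(1) e2(1) unfolding C_def E_def by simp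
  have un': "S1 \<union> S2 = fst G" using un unfolding V_def .
  have "split_2cut G (S1, add_mset {s11, s12} {#e \<in># snd G. e \<subseteq> S1#})
      (S2, add_mset {s21, s22} {#e \<in># snd G. e \<subseteq> S2#})"
    unfolding split_2cut_def
    apply (rule exI[of _ S1], rule exI[of _ S2], rule exI[of _ s11], rule exI[of _ s12],
        rule exI[of _ s21], rule exI[of _ s22])
    using un' dis ne1 e1(2,3) e2(2,3) ce cd1 cd2 unfolding V_def by simp
  then show ?thesis by blast
qed

lemma decomp_lift: "decomp_step\<^sup>*\<^sup>* A B \<Longrightarrow> decomp_step\<^sup>*\<^sup>* (A + D) (B + D)"
proof (induction rule: rtranclp_induct)
  case base then show ?case by simp
next
  case (step B B')
  then obtain G G1 G2 where g: "G \<in># B" "split_2cut G G1 G2" "B' = add_mset G1 (add_mset G2 (B - {#G#}))"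
    unfolding decomp_step_def by blast
  have "B' + D = add_mset G1 (add_mset G2 (B + D - {#G#}))" using g by simp
  moreover have "G \<in># B + D" using g by simp
  ultimately have "decomp_step (B + D) (B' + D)" unfolding decomp_step_def using g(2)
    by (intro exI[of _ G] exI[of _ G1] exI[of _ G2]) simp
  then show ?case using step(3) by simp
qed

lemma decomp_all:
  "mgraph G \<Longrightarrow> loopless G \<Longrightarrow> cubic G \<Longrightarrow> k_connected 2 G \<Longrightarrow>
   \<exists>C. decomp_step\<^sup>*\<^sup>* {#G#} C \<and> (\<forall>G\<in>#C. mgraph G \<and> cubic G \<and> loopless G \<and> k_connected 3 G)"
proof (induction "card (fst G)" arbitrary: G rule: less_induct)
  case less
  show ?case
  proof (cases "k_connected 3 G")
    case True
    then show ?thesis using less.prems by auto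
  next
    case False
    then obtain G1 G2 where sp: "split_2cut G G1 G2" using find_split less.prems by blast
    have g1: "mgraph G1 \<and> loopless G1 \<and> cubic G1 \<and> k_connected 2 G1 \<and> card (fst G1) < card (fst G)"
      using split_good1[OF less.prems sp] .
    have g2: "mgraph G2 \<and> loopless G2 \<and> cubic G2 \<and> k_connected 2 G2 \<and> card (fst G2) < card (fst G)"
      using split_good1[OF less.prems split_sym[OF sp]] .
    obtain C1 where C1: "decomp_step\<^sup>*\<^sup>* {#G1#} C1" "\<forall>G\<in>#C1. mgraph G \<and> cubic G \<and> loopless G \<and> k_connected 3 G"
      using less.hyps g1 by blast
    obtain C2 where C2: "decomp_step\<^sup>*\<^sup>* {#G2#} C2" "\<forall>G\<in>#C2. mgraph G \<and> cubic G \<and> loopless G \<and> k_connected 3 G"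
      using less.hyps g2 by blast
    have s0: "decomp_step {#G#} ({#G1#} + {#G2#})" unfolding decomp_step_def using sp
      by (intro exI[of _ G] exI[of _ G1] exI[of _ G2]) simp
    have s1: "decomp_step\<^sup>*\<^sup>* ({#G1#} + {#G2#}) (C1 + {#G2#})" using decomp_lift[OF C1(1)] .
    have "decomp_step\<^sup>*\<^sup>* ({#G2#} + C1) (C2 + C1)" using decomp_lift[OF C2(1)] .
    then have s2: "decomp_step\<^sup>*\<^sup>* (C1 + {#G2#}) (C1 + C2)" by (simp add: add.commute)
    have "decomp_step\<^sup>*\<^sup>* {#G#} (C1 + C2)" using s0 s1 s2 by (meson converse_rtranclp_into_rtranclp rtranclp_trans)
    moreover have "\<forall>G\<in>#C1 + C2. mgraph G \<and> cubic G \<and> loopless G \<and> k_connected 3 G" using C1(2) C2(2) by auto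
    ultimately show ?thesis by blast
  qed
qed

theorem theorem3:
  fixes H :: "'v mgraph"
  assumes "mgraph H" and "loopless H" and "cubic H"
    and "k_connected 2 H" and "\<not> k_connected 3 H"
  shows "\<exists>C. decomp_step\<^sup>*\<^sup>* {#H#} C \<and>
           (\<forall>G\<in>#C. mgraph G \<and> cubic G \<and> loopless G \<and> k_connected 3 G)"
  using decomp_all assms(1-4) by blast

end
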